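(* There exist an argumentation semantics $\sigma$ whose extensions are maximal conflict-free sets (w.r.t. set inclusion) and argumentation frameworks $AF=(AR,Attacks)$, $AF'=(AR',Attacks')$ with $AF\preceq_N AF'$ such that the following statement does NOT hold: if for every $E\in\sigma(AF)$ the implication $$\{(a,b)\in Attacks': a\in AR'\setminus AR,\ b\in E\}=\emptyset\ \Longrightarrow\ \forall E'\in\sigma(AF'),\ E\subseteq E'$$ holds, then for all $E\in\sigma(AF)$ and all $E'\in\sigma(AF')$ we have $E'\not\subseteq AR$ or $E'=E$.
   Context: An argumentation framework is a pair $(AR,Attacks)$ with $AR$ a finite set and $Attacks\subseteq AR\times AR$; $a$ attacks $b$ iff $(a,b)\in Attacks$. A set $S$ is conflict-free iff no element of $S$ attacks an element of $S$. An argumentation semantics $\sigma$ assigns to each argumentation framework a set $\sigma(AF)$ of subsets of $AR$; "$\sigma$'s extensions are maximal conflict-free sets" means that for every $AF$, every $E\in\sigma(AF)$ is a $\subseteq$-maximal conflict-free subset of the argument set of $AF$. $AF\preceq_N AF'$ (normal expansion) iff $AR\subseteq AR'$, $Attacks\subseteq Attacks'$ and no $(a,b)\in Attacks'\setminus Attacks$ has both $a,b\in AR$. *)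

theory Defs
  imports Main
begin

type_synonym 'a AF = "'a set \<times> ('a \<times> 'a) set"

definition is_AF :: "'a AF \<Rightarrow> bool" where
  "is_AF AF \<longleftrightarrow> finite (fst AF) \<and> snd AF \<subseteq> fst AF \<times> fst AF"

definition conflict_free :: "('a \<times> 'a) set \<Rightarrow> 'a set \<Rightarrow> bool" where
  "conflict_free Att S \<longleftrightarrow> (\<forall>a\<in>S. \<forall>b\<in>S. (a, b) \<notin> Att)"

definition maximal_conflict_free :: "'a AF \<Rightarrow> 'a set \<Rightarrow> bool" where
  "maximal_conflict_free AF S \<longleftrightarrow>
     S \<subseteq> fst AF \<and> conflict_free (snd AF) S \<and>
     (\<forall>T. S \<subset> T \<and> T \<subseteq> fst AF \<longrightarrow> \<not> conflict_free (snd AF) T)"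

definition extensions_maximal_cf :: "('a AF \<Rightarrow> 'a set set) \<Rightarrow> bool" where
  "extensions_maximal_cf \<sigma> \<longleftrightarrow>
     (\<forall>AF. is_AF AF \<longrightarrow> (\<forall>E\<in>\<sigma> AF. maximal_conflict_free AF E))"

definition normal_expansion :: "'a AF \<Rightarrow> 'a AF \<Rightarrow> bool" where
  "normal_expansion AF AF' \<longleftrightarrow>
     fst AF \<subseteq> fst AF' \<and> snd AF \<subseteq> snd AF' \<and>
     (\<forall>(a, b)\<in>snd AF' - snd AF. \<not> (a \<in> fst AF \<and> b \<in> fst AF))"

end

theory Submission
  imports Defs
begin

lemma mcf1: "maximal_conflict_free ({0,1,2::nat}, {(0,1),(2,0),(2,1)}) {1}"
  unfolding maximal_conflict_free_def conflict_free_def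
proof (intro conjI allI impI)
  fix T :: "nat set" assume a: "{1} \<subset> T \<and> T \<subseteq> fst ({0,1,2::nat}, {(0,1),(2,0),(2,1)})"
  then obtain x where x: "x \<in> T" "x \<noteq> 1" "x = 0 \<or> x = 2" by auto
  have "1 \<in> T" using a by blast
  show "\<not> (\<forall>a\<in>T. \<forall>b\<in>T. (a, b) \<notin> snd ({0,1,2::nat}, {(0,1),(2,0),(2,1)}))"
    using x \<open>1 \<in> T\<close> by auto
qed auto

lemma mcf0: "maximal_conflict_free ({0,1::nat}, {(0,1)}) {0}"
  unfolding maximal_conflict_free_def conflict_free_def
proof (intro conjI allI impI)
  fix T :: "nat set" assume a: "{0} \<subset> T \<and> T \<subseteq> fst ({0,1::nat}, {(0,1)})"
  then have "1 \<in> T" "0 \<in> T" by auto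
  then show "\<not> (\<forall>a\<in>T. \<forall>b\<in>T. (a, b) \<notin> snd ({0,1::nat}, {(0,1)}))" by auto
qed auto

theorem proposition53:
  shows "\<exists>(\<sigma> :: nat AF \<Rightarrow> nat set set) AR Att AR' Att'.
    extensions_maximal_cf \<sigma> \<and>
    is_AF (AR, Att) \<and> is_AF (AR', Att') \<and>
    normal_expansion (AR, Att) (AR', Att') \<and>
    \<not> ((\<forall>E\<in>\<sigma> (AR, Att).
            {(a, b). (a, b) \<in> Att' \<and> a \<in> AR' - AR \<and> b \<in> E} = {} \<longrightarrow>
            (\<forall>E'\<in>\<sigma> (AR', Att'). E \<subseteq> E'))
        \<longrightarrow> (\<forall>E\<in>\<sigma> (AR, Att). \<forall>E'\<in>\<sigma> (AR', Att'). \<not> E' \<subseteq> AR \<or> E' = E))"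
proof -
  define A :: "nat AF" where "A = ({0,1}, {(0,1)})"
  define B :: "nat AF" where "B = ({0,1,2}, {(0,1),(2,0),(2,1)})"
  define \<sigma> :: "nat AF \<Rightarrow> nat set set" where
    "\<sigma> X = (if X = A then {{0}} else if X = B then {{1}} else {})" for X
  have AB: "A \<noteq> B" unfolding A_def B_def by auto
  have "extensions_maximal_cf \<sigma>"
    unfolding extensions_maximal_cf_def \<sigma>_def
    using mcf0 mcf1 AB by (auto simp: A_def B_def)
  moreover have "is_AF ({0,1::nat}, {(0,1)})" "is_AF ({0,1,2::nat}, {(0,1),(2,0),(2,1)})"
    by (auto simp: is_AF_def)
  moreover have "normal_expansion ({0,1::nat}, {(0,1)}) ({0,1,2::nat}, {(0,1),(2,0),(2,1)})"
    by (auto simp: normal_expansion_def)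
  moreover have "\<sigma> ({0,1}, {(0,1)}) = {{0}}" by (simp add: \<sigma>_def A_def)
  moreover have "\<sigma> ({0,1,2}, {(0,1),(2,0),(2,1)}) = {{1}}"
    using AB by (simp add: \<sigma>_def B_def)
  moreover have "{(a, b). (a, b) \<in> {(0::nat,1::nat),(2,0),(2,1)} \<and> a \<in> {0,1,2} - {0,1} \<and> b \<in> {0}} \<noteq> {}"
    by auto
  ultimately show ?thesis
    apply (rule_tac x=\<sigma> in exI)
    apply (rule_tac x="{0,1}" in exI, rule_tac x="{(0,1)}" in exI)
    apply (rule_tac x="{0,1,2}" in exI, rule_tac x="{(0,1),(2,0),(2,1)}" in exI)
    by simp
qed

end
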